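(* Let $\mathcal{S}=(\sigma_{ij})\in\mathrm{SL}(2,\mathbb{Z})$ with $\mathrm{tr}(\mathcal{S})>2$, $\lambda>1$ its larger eigenvalue, and $P=(p_{ij})$ a real matrix with $\det P=1$ and $P\mathcal{S}P^{-1}=\mathrm{diag}(1/\lambda,\lambda)$. For real $c_1,c_2,c_3$ put $$\mathbf{t}_1=\begin{pmatrix}1&p_{11}&c_1\\0&1&p_{21}\\0&0&1\end{pmatrix},\ \mathbf{t}_2=\begin{pmatrix}1&p_{12}&c_2\\0&1&p_{22}\\0&0&1\end{pmatrix},\ \mathbf{t}_3=\begin{pmatrix}1&0&c_3\\0&\lambda&0\\0&0&1\end{pmatrix},\ \mathbf{t}_4^{s}=\begin{pmatrix}1&0&s\\0&1&0\\0&0&1\end{pmatrix}\ (s\in\mathbb{R}).$$ Then for any integers $q\ne0$, $m_1,m_2$ (and any $c_3$) there exist unique real $c_1,c_2$ for which these elements of $\mathrm{Sol}_1^4$ generate a group $\tilde\Gamma_{(\mathcal{S};q,m_1,m_2)}$ with the presentation $$\langle \mathbf{t}_1,\mathbf{t}_2,\mathbf{t}_3,\mathbf{t}_4^{1/q}\mid [\mathbf{t}_1,\mathbf{t}_2]=\mathbf{t}_4,\ \mathbf{t}_4\text{ central},\ \mathbf{t}_3\mathbf{t}_1\mathbf{t}_3^{-1}=\mathbf{t}_1^{\sigma_{11}}\mathbf{t}_2^{\sigma_{21}}\mathbf{t}_4^{m_1/q},\ \mathbf{t}_3\mathbf{t}_2\mathbf{t}_3^{-1}=\mathbf{t}_1^{\sigma_{12}}\mathbf{t}_2^{\sigma_{22}}\mathbf{t}_4^{m_2/q}\rangle;$$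 that is, unique $c_1,c_2$ for which the last two relations hold.
   Context: $\mathrm{Sol}_1^4$ is the group of real matrices $\begin{pmatrix}1&x&z\\0&e^u&y\\0&0&1\end{pmatrix}$. *)

theory Defs
  imports "HOL-Analysis.Analysis"
begin

fun mat_pow :: "real^'n^'n \<Rightarrow> nat \<Rightarrow> real^'n^'n" where
  "mat_pow A 0 = mat 1"
| "mat_pow A (Suc n) = A ** mat_pow A n"

definition mat_zpow :: "real^'n^'n \<Rightarrow> int \<Rightarrow> real^'n^'n" where
  "mat_zpow A k = (if 0 \<le> k then mat_pow A (nat k) else mat_pow (matrix_inv A) (nat (- k)))"

definition mat3 :: "real \<Rightarrow> real \<Rightarrow> real \<Rightarrow> real \<Rightarrow> real \<Rightarrow> real \<Rightarrow> real \<Rightarrow> real \<Rightarrow> real \<Rightarrow> real^3^3" where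
  "mat3 a11 a12 a13 a21 a22 a23 a31 a32 a33 =
     vector [vector [a11, a12, a13], vector [a21, a22, a23], vector [a31, a32, a33]]"

definition sol :: "real \<Rightarrow> real \<Rightarrow> real \<Rightarrow> real \<Rightarrow> real^3^3" where
  "sol x y z u = mat3 1 x z 0 (exp u) y 0 0 1"

definition t4 :: "real \<Rightarrow> real^3^3" where
  "t4 s = sol 0 0 s 0"

definition real_mat :: "int^'n^'m \<Rightarrow> real^'n^'m" where
  "real_mat S = (\<chi> i j. real_of_int (S $ i $ j))"

definition is_eigenvalue :: "real^'n^'n \<Rightarrow> real \<Rightarrow> bool" where
  "is_eigenvalue A \<mu> \<longleftrightarrow> (\<exists>v. v \<noteq> 0 \<and> A *v v = \<mu> *s v)"

definition commutator :: "real^'n^'n \<Rightarrow> real^'n^'n \<Rightarrow> real^'n^'n" where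
  "commutator a b = a ** b ** matrix_inv a ** matrix_inv b"

end

theory Submission
  imports Defs
begin

definition H :: "real \<Rightarrow> real \<Rightarrow> real \<Rightarrow> real^3^3" where
  "H x y z = mat3 1 x z 0 1 y 0 0 1"

lemma mat3_eq: "mat3 a11 a12 a13 a21 a22 a23 a31 a32 a33 = mat3 b11 b12 b13 b21 b22 b23 b31 b32 b33
  \<longleftrightarrow> a11=b11 \<and> a12=b12 \<and> a13=b13 \<and> a21=b21 \<and> a22=b22 \<and> a23=b23 \<and> a31=b31 \<and> a32=b32 \<and> a33=b33"
  by (auto simp: mat3_def vec_eq_iff forall_3)

lemma mat3_mult: "mat3 a11 a12 a13 a21 a22 a23 a31 a32 a33 ** mat3 b11 b12 b13 b21 b22 b23 b31 b32 b33
  = mat3 (a11*b11+a12*b21+a13*b31) (a11*b12+a12*b22+a13*b32) (a11*b13+a12*b23+a13*b33)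
         (a21*b11+a22*b21+a23*b31) (a21*b12+a22*b22+a23*b32) (a21*b13+a22*b23+a23*b33)
         (a31*b11+a32*b21+a33*b31) (a31*b12+a32*b22+a33*b32) (a31*b13+a32*b23+a33*b33)"
  by (simp add: mat3_def vec_eq_iff forall_3 matrix_matrix_mult_def sum_3)

lemma mat3_one: "mat 1 = mat3 1 0 0 0 1 0 0 0 1"
  by (simp add: mat3_def vec_eq_iff forall_3 mat_def)

lemma H_mult: "H a b c ** H a' b' c' = H (a+a') (b+b') (c+c'+a*b')"
  by (simp add: H_def mat3_mult mat3_eq)

lemma H_eq: "H a b c = H a' b' c' \<longleftrightarrow> a=a' \<and> b=b' \<and> c=c'"
  by (auto simp: H_def mat3_eq)

lemma inv_unique: fixes A B :: "real^'n^'n"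
  assumes "A ** B = mat 1" "B ** A = mat 1" shows "matrix_inv A = B"
proof -
  have ex: "\<exists>A'. A ** A' = mat 1 \<and> A' ** A = mat 1" using assms by blast
  let ?I = "matrix_inv A"
  have I: "A ** ?I = mat 1 \<and> ?I ** A = mat 1"
    unfolding matrix_inv_def by (rule someI_ex[OF ex])
  have "B = B ** (A ** ?I)" using I by simp
  also have "\<dots> = (B ** A) ** ?I" by (simp add: matrix_mul_assoc)
  finally show ?thesis using assms by simp
qed

lemma H_inv: "matrix_inv (H x y z) = H (-x) (-y) (-z + x*y)"
  by (rule inv_unique) (simp_all add: H_mult mat3_one H_def[symmetric] algebra_simps)

lemma H_pow: "mat_pow (H x y z) n = H (real n * x) (real n * y) (real n * z + real n * (real n - 1) / 2 * x * y)"
proof (induction n)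
  case 0 show ?case by (simp add: mat3_one H_def)
next
  case (Suc n) show ?case by (simp add: Suc H_mult H_eq) (simp add: field_simps)
qed

lemma H_zpow: "mat_zpow (H x y z) k = H (of_int k * x) (of_int k * y) (of_int k * z + of_int k * (of_int k - 1) / 2 * x * y)"
proof (cases "0 \<le> k")
  case True then show ?thesis by (simp add: mat_zpow_def H_pow)
next
  case False
  then have k: "real (nat (-k)) = - of_int k" by simp
  show ?thesis using False by (simp add: mat_zpow_def H_pow H_inv k H_eq) (simp add: field_simps)
qed

lemma t4_H: "t4 s = H 0 0 s" by (simp add: t4_def sol_def H_def)

definition T3 :: "real \<Rightarrow> real \<Rightarrow> real^3^3" where "T3 c l = mat3 1 0 c 0 l 0 0 0 1"

lemma T3_inv: "l \<noteq> 0 \<Longrightarrow> matrix_inv (T3 c l) = mat3 1 0 (-c) 0 (1/l) 0 0 0 1"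
  by (rule inv_unique) (simp_all add: T3_def mat3_mult mat3_one)

lemma T3_conj: "l \<noteq> 0 \<Longrightarrow> T3 c l ** H x y z ** matrix_inv (T3 c l) = H (x/l) (l*y) z"
  by (simp add: T3_inv) (simp add: T3_def H_def mat3_mult mat3_eq)

lemma T3_t4: "T3 c l ** H 0 0 1 = H 0 0 1 ** T3 c l"
  by (simp add: T3_def H_def mat3_mult mat3_eq)

lemma rr: fixes lam a b a' b' x y z c1 c2 c3 M :: real and k1 k2 :: int
  assumes e11: "a * of_int k1 + a' * of_int k2 = x / lam" and e21: "b * of_int k1 + b' * of_int k2 = lam * y"
   and l0: "lam \<noteq> 0"
  shows "T3 c3 lam ** H x y z ** matrix_inv (T3 c3 lam) =
               mat_zpow (H a b c1) k1 ** mat_zpow (H a' b' c2) k2 ** t4 M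
          \<longleftrightarrow> z = of_int k1 * c1 + of_int k2 * c2 + (of_int k1 * (of_int k1 - 1) / 2 * a * b + of_int k2 * (of_int k2 - 1) / 2 * a' * b' + of_int k1 * a * (of_int k2 * b') + M)"
proof -
  have x: "x / lam = of_int k1 * a + of_int k2 * a'" using e11 by (simp add: algebra_simps)
  have y: "lam * y = of_int k1 * b + of_int k2 * b'" using e21 by (simp add: algebra_simps)
  show ?thesis unfolding T3_conj[OF l0] H_zpow t4_H H_mult H_eq x y
    by (auto simp: algebra_simps)
qed

lemma solve: fixes s11 s12 s21 s22 K1 K2 :: real
  assumes Dl: "\<Delta> \<noteq> 0" and D: "\<Delta> = (1 - s11) * (1 - s22) - s12 * s21"
  shows "\<exists>!(c1, c2). c1 = s11 * c1 + s21 * c2 + K1 \<and> c2 = s12 * c1 + s22 * c2 + K2"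
proof
  define a where "a = (K1 * (1 - s22) + s21 * K2) / \<Delta>"
  define b where "b = ((1 - s11) * K2 + s12 * K1) / \<Delta>"
  have A: "a * \<Delta> = K1 * (1 - s22) + s21 * K2" "b * \<Delta> = (1 - s11) * K2 + s12 * K1"
    using Dl by (simp_all add: a_def b_def)
  have "a * \<Delta> = (s11 * a + s21 * b + K1) * \<Delta>" "b * \<Delta> = (s12 * a + s22 * b + K2) * \<Delta>"
    using A unfolding D by algebra+
  then have "a = s11 * a + s21 * b + K1" "b = s12 * a + s22 * b + K2" using Dl by simp_all
  then show "case (a, b) of (c1, c2) \<Rightarrow> c1 = s11 * c1 + s21 * c2 + K1 \<and> c2 = s12 * c1 + s22 * c2 + K2"
    by simp
  fix c assume "case c of (c1, c2) \<Rightarrow> c1 = s11 * c1 + s21 * c2 + K1 \<and> c2 = s12 * c1 + s22 * c2 + K2"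
  then obtain x y where c: "c = (x, y)" "x = s11 * x + s21 * y + K1" "y = s12 * x + s22 * y + K2"
    by (cases c) auto
  have "x * \<Delta> = a * \<Delta>" "y * \<Delta> = b * \<Delta>"
    unfolding A unfolding D using c(2,3) by algebra+
  then show "c = (a, b)" using Dl c(1) by simp
qed
lemma inv_left: fixes A :: "real^'n^'n" assumes "invertible A" shows "matrix_inv A ** A = mat 1"
proof -
  have ex: "\<exists>A'. A ** A' = mat 1 \<and> A' ** A = mat 1" using assms unfolding invertible_def by blast
  show ?thesis unfolding matrix_inv_def using someI_ex[OF ex] by blast
qed

theorem lemma5p2:
  fixes S :: "int^2^2" and lam :: real and P :: "real^2^2"
    and q m1 m2 :: int and c3 :: real
  assumes SL2: "det S = 1"
    and tr: "trace S > 2"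
    and lam_gt: "lam > 1"
    and lam_eig: "is_eigenvalue (real_mat S) lam"
    and lam_larger: "\<forall>\<mu>. is_eigenvalue (real_mat S) \<mu> \<longrightarrow> \<mu> \<le> lam"
    and detP: "det P = 1"
    and diag: "P ** real_mat S ** matrix_inv P = vector [vector [1 / lam, 0], vector [0, lam]]"
    and q: "q \<noteq> 0"
  shows "\<exists>!(c1, c2). (let
            t1 = mat3 1 (P$1$1) c1  0 1 (P$2$1)  0 0 1;
            t2 = mat3 1 (P$1$2) c2  0 1 (P$2$2)  0 0 1;
            t3 = mat3 1 0 c3  0 lam 0  0 0 1
          in commutator t1 t2 = t4 1
           \<and> (\<forall>g \<in> {t1, t2, t3}. g ** t4 1 = t4 1 ** g)
           \<and> t3 ** t1 ** matrix_inv t3 =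
               mat_zpow t1 (S$1$1) ** mat_zpow t2 (S$2$1) ** t4 (real_of_int m1 / real_of_int q)
           \<and> t3 ** t2 ** matrix_inv t3 =
               mat_zpow t1 (S$1$2) ** mat_zpow t2 (S$2$2) ** t4 (real_of_int m2 / real_of_int q))"
proof -
  define R where "R = real_mat S"
  define D :: "real^2^2" where "D = vector [vector [1 / lam, 0], vector [0, lam]]"
  have inv: "invertible P" using detP by (simp add: invertible_det_nz)
  have "P ** R = P ** R ** (matrix_inv P ** P)" using inv_left[OF inv] by simp
  also have "\<dots> = (P ** R ** matrix_inv P) ** P" by (simp add: matrix_mul_assoc)
  finally have "P ** R = (P ** R ** matrix_inv P) ** P" .
  hence PR: "P ** R = D ** P" using diag by (simp add: R_def D_def)
  define p11 where "p11 = P$1$1"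
  define p12 where "p12 = P$1$2"
  define p21 where "p21 = P$2$1"
  define p22 where "p22 = P$2$2"
  define s11 where "s11 = real_of_int (S$1$1)"
  define s12 where "s12 = real_of_int (S$1$2)"
  define s21 where "s21 = real_of_int (S$2$1)"
  define s22 where "s22 = real_of_int (S$2$2)"
  have l0: "lam \<noteq> 0" using lam_gt by simp
  have e: "(P ** R)$i$j = (D ** P)$i$j" for i j using PR by simp
  have e11: "p11 * s11 + p12 * s21 = p11 / lam"
    using e[of 1 1] by (simp add: matrix_matrix_mult_def sum_2 R_def real_mat_def D_def p11_def p12_def s11_def s21_def)
  have e12: "p11 * s12 + p12 * s22 = p12 / lam"
    using e[of 1 2] by (simp add: matrix_matrix_mult_def sum_2 R_def real_mat_def D_def p11_def p12_def s12_def s22_def)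
  have e21: "p21 * s11 + p22 * s21 = lam * p21"
    using e[of 2 1] by (simp add: matrix_matrix_mult_def sum_2 R_def real_mat_def D_def p21_def p22_def s11_def s21_def)
  have e22: "p21 * s12 + p22 * s22 = lam * p22"
    using e[of 2 2] by (simp add: matrix_matrix_mult_def sum_2 R_def real_mat_def D_def p21_def p22_def s12_def s22_def)
  have dP: "p11 * p22 - p12 * p21 = 1" using detP by (simp add: det_2 p11_def p12_def p21_def p22_def)
  have dS: "s11 * s22 - s12 * s21 = 1"
  proof -
    have "real_of_int (det S) = 1" using SL2 by simp
    thus ?thesis by (simp add: det_2 s11_def s12_def s21_def s22_def)
  qed
  have tS: "s11 + s22 > 2"
  proof -
    have "real_of_int (trace S) > 2" using tr by simp
    thus ?thesis by (simp add: trace_def sum_2 s11_def s22_def)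
  qed
  define K1 where "K1 = s11 * (s11 - 1) / 2 * p11 * p21 + s21 * (s21 - 1) / 2 * p12 * p22 + s11 * p11 * (s21 * p22) + real_of_int m1 / real_of_int q"
  define K2 where "K2 = s12 * (s12 - 1) / 2 * p11 * p21 + s22 * (s22 - 1) / 2 * p12 * p22 + s12 * p11 * (s22 * p22) + real_of_int m2 / real_of_int q"
  have key: "(let
            t1 = mat3 1 (P$1$1) c1  0 1 (P$2$1)  0 0 1;
            t2 = mat3 1 (P$1$2) c2  0 1 (P$2$2)  0 0 1;
            t3 = mat3 1 0 c3  0 lam 0  0 0 1
          in commutator t1 t2 = t4 1
           \<and> (\<forall>g \<in> {t1, t2, t3}. g ** t4 1 = t4 1 ** g)
           \<and> t3 ** t1 ** matrix_inv t3 =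
               mat_zpow t1 (S$1$1) ** mat_zpow t2 (S$2$1) ** t4 (real_of_int m1 / real_of_int q)
           \<and> t3 ** t2 ** matrix_inv t3 =
               mat_zpow t1 (S$1$2) ** mat_zpow t2 (S$2$2) ** t4 (real_of_int m2 / real_of_int q))
      \<longleftrightarrow> c1 = s11 * c1 + s21 * c2 + K1 \<and> c2 = s12 * c1 + s22 * c2 + K2" for c1 c2
  proof -
    have A: "mat3 1 (P$1$1) c1  0 1 (P$2$1)  0 0 1 = H p11 p21 c1" by (simp add: H_def p11_def p21_def)
    have B: "mat3 1 (P$1$2) c2  0 1 (P$2$2)  0 0 1 = H p12 p22 c2" by (simp add: H_def p12_def p22_def)
    have C: "mat3 1 0 c3  0 lam 0  0 0 1 = T3 c3 lam" by (simp add: T3_def)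
    have comm: "commutator (H p11 p21 c1) (H p12 p22 c2) = t4 1"
      unfolding commutator_def t4_H using dP by (simp add: H_inv H_mult H_eq) (simp add: algebra_simps)
    have cen: "\<forall>g \<in> {H p11 p21 c1, H p12 p22 c2, T3 c3 lam}. g ** t4 1 = t4 1 ** g"
      by (simp add: t4_H H_mult T3_t4 add.commute)
    have r1: "T3 c3 lam ** H p11 p21 c1 ** matrix_inv (T3 c3 lam) =
               mat_zpow (H p11 p21 c1) (S$1$1) ** mat_zpow (H p12 p22 c2) (S$2$1) ** t4 (real_of_int m1 / real_of_int q)
          \<longleftrightarrow> c1 = s11 * c1 + s21 * c2 + K1"
      using rr[of p11 "S$1$1" p12 "S$2$1" p11 lam p21 p22 p21, OF _ _ l0] e11 e21
      unfolding K1_def s11_def s21_def by simp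
    have r2: "T3 c3 lam ** H p12 p22 c2 ** matrix_inv (T3 c3 lam) =
               mat_zpow (H p11 p21 c1) (S$1$2) ** mat_zpow (H p12 p22 c2) (S$2$2) ** t4 (real_of_int m2 / real_of_int q)
          \<longleftrightarrow> c2 = s12 * c1 + s22 * c2 + K2"
      using rr[of p11 "S$1$2" p12 "S$2$2" p12 lam p21 p22 p22, OF _ _ l0] e12 e22
      unfolding K2_def s12_def s22_def by simp
    show ?thesis unfolding A B C Let_def using comm cen r1 r2 by simp
  qed
  have Dl: "(1 - s11) * (1 - s22) - s12 * s21 \<noteq> 0" using dS tS by (simp add: algebra_simps)
  show ?thesis unfolding key using solve[OF Dl refl] .
qed

end
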